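(* Let $(X,d)$ be a bicomplete quasi-pseudometric space. Let $J:X\to X$ be a continuous single-valued map such that $r\,d(x,y)\le d(Jx,Jy)$ for all $x,y\in X$, for some constant $r>0$. Let $F:X\to CB(X)$ be a set-valued map such that $$H(Fx,Fy)\le \alpha\big[d(Jx,Fx)+d(Jy,Fy)\big]\quad\text{for all }x,y\in X,$$ where $\alpha\in(0,1/2)$. Then there exists a unique $x_0\in X$ which is both a startpoint and an endpoint of $J$ and $F$ if and only if $J$ and $F$ have the approximate mix-point property.
   Context: A quasi-pseudometric on a nonempty set $X$ is a map $d:X\times X\to[0,\infty)$ with $d(x,x)=0$ and $d(x,z)\le d(x,y)+d(y,z)$ for all $x,y,z$; it is $T_0$ if $d(x,y)=0=d(y,x)$ implies $x=y$. Write $d^s(x,y)=\max\{d(x,y),d(y,x)\}$. The space $(X,d)$ is bicomplete if $d$ is $T_0$ and the metric $d^s$ is complete. For $x\in X$ and nonempty $A\subseteq X$: $d(x,A)=\inf_{a\in A}d(x,a)$, $d(A,x)=\inf_{a\in A}d(a,x)$. For nonempty $A,B\subseteq X$: $H(A,B)=\max\{\sup_{a\in A}d(a,B),\ \sup_{b\in B}d(A,b)\}$. $CB(X)$ denotes the family of nonempty $d^s$-bounded, $\tau(d^s)$-closed subsets of $X$; continuity of $J$ is with respect to $\tau(d^s)$. For $J:X\to X$ and $F:X\to 2^X$, a point $x$ is a startpoint of $J$ and $F$ if $H(\{Jx\},Fx)=0$ and an endpoint of $J$ and $F$ if $H(Fx,\{Jx\})=0$. $J$ and $F$ have the approximate mix-point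 property if $\inf_{x\in X}\sup_{y\in Fx}d^s(Jx,y)=0$. *)

theory Defs
  imports "HOL-Analysis.Analysis"
begin

definition quasi_pseudometric :: "('a \<Rightarrow> 'a \<Rightarrow> real) \<Rightarrow> bool" where
  "quasi_pseudometric d \<longleftrightarrow>
     (\<forall>x y. d x y \<ge> 0) \<and> (\<forall>x. d x x = 0) \<and> (\<forall>x y z. d x z \<le> d x y + d y z)"

definition qpm_T0 :: "('a \<Rightarrow> 'a \<Rightarrow> real) \<Rightarrow> bool" where
  "qpm_T0 d \<longleftrightarrow> (\<forall>x y. d x y = 0 \<and> d y x = 0 \<longrightarrow> x = y)"

definition dsym :: "('a \<Rightarrow> 'a \<Rightarrow> real) \<Rightarrow> 'a \<Rightarrow> 'a \<Rightarrow> real" where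
  "dsym d x y = max (d x y) (d y x)"

definition ds_Cauchy :: "('a \<Rightarrow> 'a \<Rightarrow> real) \<Rightarrow> (nat \<Rightarrow> 'a) \<Rightarrow> bool" where
  "ds_Cauchy d s \<longleftrightarrow> (\<forall>e>0. \<exists>N. \<forall>m\<ge>N. \<forall>n\<ge>N. dsym d (s m) (s n) < e)"

definition ds_converges :: "('a \<Rightarrow> 'a \<Rightarrow> real) \<Rightarrow> (nat \<Rightarrow> 'a) \<Rightarrow> 'a \<Rightarrow> bool" where
  "ds_converges d s x \<longleftrightarrow> (\<lambda>n. dsym d (s n) x) \<longlonglongrightarrow> 0"

definition bicomplete :: "('a \<Rightarrow> 'a \<Rightarrow> real) \<Rightarrow> bool" where
  "bicomplete d \<longleftrightarrow> qpm_T0 d \<and> (\<forall>s. ds_Cauchy d s \<longrightarrow> (\<exists>x. ds_converges d s x))"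

definition ds_open :: "('a \<Rightarrow> 'a \<Rightarrow> real) \<Rightarrow> 'a set \<Rightarrow> bool" where
  "ds_open d U \<longleftrightarrow> (\<forall>x\<in>U. \<exists>e>0. {y. dsym d x y < e} \<subseteq> U)"

definition ds_closed :: "('a \<Rightarrow> 'a \<Rightarrow> real) \<Rightarrow> 'a set \<Rightarrow> bool" where
  "ds_closed d A \<longleftrightarrow> ds_open d (- A)"

definition ds_bounded :: "('a \<Rightarrow> 'a \<Rightarrow> real) \<Rightarrow> 'a set \<Rightarrow> bool" where
  "ds_bounded d A \<longleftrightarrow> (\<exists>M. \<forall>a\<in>A. \<forall>b\<in>A. dsym d a b \<le> M)"

definition CB :: "('a \<Rightarrow> 'a \<Rightarrow> real) \<Rightarrow> 'a set set" where
  "CB d = {A. A \<noteq> {} \<and> ds_bounded d A \<and> ds_closed d A}"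

definition ds_continuous :: "('a \<Rightarrow> 'a \<Rightarrow> real) \<Rightarrow> ('a \<Rightarrow> 'a) \<Rightarrow> bool" where
  "ds_continuous d J \<longleftrightarrow>
     (\<forall>x. \<forall>e>0. \<exists>\<delta>>0. \<forall>y. dsym d x y < \<delta> \<longrightarrow> dsym d (J x) (J y) < e)"

definition dpt_set :: "('a \<Rightarrow> 'a \<Rightarrow> real) \<Rightarrow> 'a \<Rightarrow> 'a set \<Rightarrow> real" where
  "dpt_set d x A = (INF a\<in>A. d x a)"

definition dset_pt :: "('a \<Rightarrow> 'a \<Rightarrow> real) \<Rightarrow> 'a set \<Rightarrow> 'a \<Rightarrow> real" where
  "dset_pt d A x = (INF a\<in>A. d a x)"

definition Haus :: "('a \<Rightarrow> 'a \<Rightarrow> real) \<Rightarrow> 'a set \<Rightarrow> 'a set \<Rightarrow> real" where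
  "Haus d A B = max (SUP a\<in>A. dpt_set d a B) (SUP b\<in>B. dset_pt d A b)"

definition startpoint :: "('a \<Rightarrow> 'a \<Rightarrow> real) \<Rightarrow> ('a \<Rightarrow> 'a) \<Rightarrow> ('a \<Rightarrow> 'a set) \<Rightarrow> 'a \<Rightarrow> bool" where
  "startpoint d J F x \<longleftrightarrow> Haus d {J x} (F x) = 0"

definition endpoint :: "('a \<Rightarrow> 'a \<Rightarrow> real) \<Rightarrow> ('a \<Rightarrow> 'a) \<Rightarrow> ('a \<Rightarrow> 'a set) \<Rightarrow> 'a \<Rightarrow> bool" where
  "endpoint d J F x \<longleftrightarrow> Haus d (F x) {J x} = 0"

definition approx_mix_point_property :: "('a \<Rightarrow> 'a \<Rightarrow> real) \<Rightarrow> ('a \<Rightarrow> 'a) \<Rightarrow> ('a \<Rightarrow> 'a set) \<Rightarrow> bool" where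
  "approx_mix_point_property d J F \<longleftrightarrow> (INF x. SUP y\<in>F x. dsym d (J x) y) = 0"

end

theory Submission
  imports Defs
begin

lemma qpm0: "quasi_pseudometric d \<Longrightarrow> 0 \<le> d x y"
  unfolding quasi_pseudometric_def by auto
lemma qpm1: "quasi_pseudometric d \<Longrightarrow> d x x = 0"
  unfolding quasi_pseudometric_def by auto
lemma qpm2: "quasi_pseudometric d \<Longrightarrow> d x z \<le> d x y + d y z"
  unfolding quasi_pseudometric_def by blast

lemma dsym_ge1: "d x y \<le> dsym d x y" by (simp add: dsym_def)
lemma dsym_ge2: "d y x \<le> dsym d x y" by (simp add: dsym_def)
lemma dsym_comm: "dsym d x y = dsym d y x" by (simp add: dsym_def max.commute)
lemma dsym_nn: "quasi_pseudometric d \<Longrightarrow> 0 \<le> dsym d x y"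
  using qpm0 dsym_ge1 order_trans by metis
lemma dsym_tri: assumes "quasi_pseudometric d" shows "dsym d x z \<le> dsym d x y + dsym d y z"
proof -
  have "d x z \<le> d x y + d y z" "d z x \<le> d z y + d y x" using qpm2[OF assms] by auto
  moreover have "d x y \<le> dsym d x y" "d y x \<le> dsym d x y" "d y z \<le> dsym d y z" "d z y \<le> dsym d y z"
    by (auto simp: dsym_def)
  ultimately show ?thesis unfolding dsym_def[of d x z] by simp
qed

lemma dpt_lower: "quasi_pseudometric d \<Longrightarrow> b \<in> B \<Longrightarrow> dpt_set d a B \<le> d a b"
  unfolding dpt_set_def by (rule cINF_lower) (auto intro!: bdd_belowI2 qpm0)
lemma dpt_greatest: "B \<noteq> {} \<Longrightarrow> (\<And>b. b \<in> B \<Longrightarrow> c \<le> d a b) \<Longrightarrow> c \<le> dpt_set d a B"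
  unfolding dpt_set_def by (rule cINF_greatest) auto
lemma dset_lower: "quasi_pseudometric d \<Longrightarrow> a \<in> A \<Longrightarrow> dset_pt d A b \<le> d a b"
  unfolding dset_pt_def by (rule cINF_lower) (auto intro!: bdd_belowI2 qpm0)
lemma dset_greatest: "A \<noteq> {} \<Longrightarrow> (\<And>a. a \<in> A \<Longrightarrow> c \<le> d a b) \<Longrightarrow> c \<le> dset_pt d A b"
  unfolding dset_pt_def by (rule cINF_greatest) auto

lemma haus_ge1:
  assumes q: "quasi_pseudometric d" and "A \<noteq> {}" "B \<noteq> {}" "ds_bounded d A" "ds_bounded d B" "a \<in> A"
  shows "dpt_set d a B \<le> Haus d A B"
proof -
  obtain a0 b0 where a0: "a0 \<in> A" and b0: "b0 \<in> B" using assms by blast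
  obtain M where M: "\<forall>x\<in>A. \<forall>y\<in>A. dsym d x y \<le> M" using assms unfolding ds_bounded_def by blast
  have "bdd_above ((\<lambda>a. dpt_set d a B) ` A)"
  proof (rule bdd_aboveI2)
    fix x assume x: "x \<in> A"
    have "dpt_set d x B \<le> d x b0" using dpt_lower[OF q b0] .
    also have "\<dots> \<le> d x a0 + d a0 b0" using qpm2[OF q] .
    also have "\<dots> \<le> M + d a0 b0" using M x a0 dsym_ge1[of d x a0] by force
    finally show "dpt_set d x B \<le> M + d a0 b0" .
  qed
  hence "dpt_set d a B \<le> (SUP a\<in>A. dpt_set d a B)" using assms(6) by (intro cSUP_upper)
  thus ?thesis unfolding Haus_def by linarith
qed

lemma haus_ge2:
  assumes q: "quasi_pseudometric d" and "A \<noteq> {}" "B \<noteq> {}" "ds_bounded d A" "ds_bounded d B" "b \<in> B"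
  shows "dset_pt d A b \<le> Haus d A B"
proof -
  obtain a0 b0 where a0: "a0 \<in> A" and b0: "b0 \<in> B" using assms by blast
  obtain M where M: "\<forall>x\<in>B. \<forall>y\<in>B. dsym d x y \<le> M" using assms unfolding ds_bounded_def by blast
  have "bdd_above ((\<lambda>b. dset_pt d A b) ` B)"
  proof (rule bdd_aboveI2)
    fix x assume x: "x \<in> B"
    have "dset_pt d A x \<le> d a0 x" using dset_lower[OF q a0] .
    also have "\<dots> \<le> d a0 b0 + d b0 x" using qpm2[OF q] .
    also have "\<dots> \<le> d a0 b0 + M" using M x b0 dsym_ge1[of d b0 x] by force
    finally show "dset_pt d A x \<le> d a0 b0 + M" .
  qed
  hence "dset_pt d A b \<le> (SUP b\<in>B. dset_pt d A b)" using assms(6) by (intro cSUP_upper)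
  thus ?thesis unfolding Haus_def by linarith
qed

lemma sup_upper:
  assumes q: "quasi_pseudometric d" and "ds_bounded d A" "y \<in> A"
  shows "dsym d p y \<le> (SUP y\<in>A. dsym d p y)"
proof -
  obtain M where M: "\<forall>x\<in>A. \<forall>y\<in>A. dsym d x y \<le> M" using assms unfolding ds_bounded_def by blast
  have "bdd_above ((\<lambda>x. dsym d p x) ` A)"
  proof (rule bdd_aboveI2)
    fix x assume x: "x \<in> A"
    have "dsym d p x \<le> dsym d p y + dsym d y x" by (rule dsym_tri[OF q])
    thus "dsym d p x \<le> dsym d p y + M" using M x assms(3) by force
  qed
  thus ?thesis using assms(3) by (intro cSUP_upper)
qed

lemma lemA:
  assumes q: "quasi_pseudometric d" and "A \<noteq> {}" "B \<noteq> {}" "ds_bounded d A" "ds_bounded d B"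
    and s: "\<And>a. a \<in> A \<Longrightarrow> d p a \<le> s" and t: "\<And>b. b \<in> B \<Longrightarrow> d b q \<le> t"
  shows "d p q \<le> s + t + Haus d A B"
proof -
  obtain a where a: "a \<in> A" using assms by blast
  have "d p q - s - t \<le> dpt_set d a B"
  proof (rule dpt_greatest[OF assms(3)])
    fix b assume b: "b \<in> B"
    have "d p q \<le> d p a + d a q" "d a q \<le> d a b + d b q" using qpm2[OF q] by auto
    thus "d p q - s - t \<le> d a b" using s[OF a] t[OF b] by linarith
  qed
  thus ?thesis using haus_ge1[OF q assms(2-5) a] by linarith
qed

lemma lemB:
  assumes q: "quasi_pseudometric d" and "A \<noteq> {}" "B \<noteq> {}" "ds_bounded d A" "ds_bounded d B"
    and s: "\<And>a. a \<in> A \<Longrightarrow> d p a \<le> s" and y: "y \<in> B"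
  shows "d p y \<le> s + Haus d A B"
proof -
  have "d p y - s \<le> dset_pt d A y"
  proof (rule dset_greatest[OF assms(2)])
    fix a assume a: "a \<in> A"
    have "d p y \<le> d p a + d a y" using qpm2[OF q] by auto
    thus "d p y - s \<le> d a y" using s[OF a] by linarith
  qed
  thus ?thesis using haus_ge2[OF q assms(2-5) y] by linarith
qed

lemma lemC:
  assumes q: "quasi_pseudometric d" and "A \<noteq> {}" "B \<noteq> {}" "ds_bounded d A" "ds_bounded d B"
    and t: "\<And>b. b \<in> B \<Longrightarrow> d b p \<le> t" and y: "y \<in> A"
  shows "d y p \<le> t + Haus d A B"
proof -
  have "d y p - t \<le> dpt_set d y B"
  proof (rule dpt_greatest[OF assms(3)])
    fix b assume b: "b \<in> B"
    have "d y p \<le> d y b + d b p" using qpm2[OF q] by auto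
    thus "d y p - t \<le> d y b" using t[OF b] by linarith
  qed
  thus ?thesis using haus_ge1[OF q assms(2-5) y] by linarith
qed

lemma single_bounded: "quasi_pseudometric d \<Longrightarrow> ds_bounded d {p}"
  unfolding ds_bounded_def by (auto simp: dsym_def qpm1)


theorem mainTheorem6:
  fixes d :: "'a \<Rightarrow> 'a \<Rightarrow> real" and J :: "'a \<Rightarrow> 'a" and F :: "'a \<Rightarrow> 'a set"
    and r \<alpha> :: real
  assumes "quasi_pseudometric d" and "bicomplete d"
    and "ds_continuous d J"
    and "r > 0" and "\<And>x y. r * d x y \<le> d (J x) (J y)"
    and "\<And>x. F x \<in> CB d"
    and "0 < \<alpha>" and "\<alpha> < 1/2"
    and "\<And>x y. Haus d (F x) (F y) \<le> \<alpha> * (dpt_set d (J x) (F x) + dpt_set d (J y) (F y))"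
  shows "(\<exists>!x0. startpoint d J F x0 \<and> endpoint d J F x0) \<longleftrightarrow> approx_mix_point_property d J F"
proof -
  note q = assms(1)
  have T0: "\<And>x y. d x y = 0 \<Longrightarrow> d y x = 0 \<Longrightarrow> x = y"
    using assms(2) unfolding bicomplete_def qpm_T0_def by blast
  have compl: "\<And>s. ds_Cauchy d s \<Longrightarrow> \<exists>x. ds_converges d s x"
    using assms(2) unfolding bicomplete_def by blast
  have Fne: "\<And>x. F x \<noteq> {}" and Fb: "\<And>x. ds_bounded d (F x)"
    using assms(6) unfolding CB_def by auto
  define S where "S x = (SUP y\<in>F x. dsym d (J x) y)" for x
  have Sup: "\<And>x y. y \<in> F x \<Longrightarrow> dsym d (J x) y \<le> S x"
    unfolding S_def by (rule sup_upper[OF q Fb])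
  have Snn: "\<And>x. 0 \<le> S x"
  proof -
    fix x obtain y where "y \<in> F x" using Fne by blast
    thus "0 \<le> S x" using Sup dsym_nn[OF q] order_trans by metis
  qed
  have Dle: "\<And>x. dpt_set d (J x) (F x) \<le> S x"
  proof -
    fix x obtain y where y: "y \<in> F x" using Fne by blast
    have "dpt_set d (J x) (F x) \<le> d (J x) y" by (rule dpt_lower[OF q y])
    also have "\<dots> \<le> S x" using dsym_ge1 Sup[OF y] order_trans by metis
    finally show "dpt_set d (J x) (F x) \<le> S x" .
  qed
  have key: "\<And>x. (startpoint d J F x \<and> endpoint d J F x) \<longleftrightarrow> F x = {J x}"
  proof
    fix x assume h: "startpoint d J F x \<and> endpoint d J F x"
    have "\<forall>b\<in>F x. b = J x"
    proof
      fix b assume b: "b \<in> F x"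
      have "dset_pt d {J x} b \<le> Haus d {J x} (F x)"
        by (rule haus_ge2[OF q _ Fne single_bounded[OF q] Fb b]) simp
      hence 1: "d (J x) b \<le> 0" using h unfolding startpoint_def dset_pt_def by simp
      have "dpt_set d b {J x} \<le> Haus d (F x) {J x}"
        by (rule haus_ge1[OF q Fne _ Fb single_bounded[OF q] b]) simp
      hence 2: "d b (J x) \<le> 0" using h unfolding endpoint_def dpt_set_def by simp
      show "b = J x" using 1 2 qpm0[OF q, of b "J x"] qpm0[OF q, of "J x" b] T0 by force
    qed
    thus "F x = {J x}" using Fne[of x] by auto
  next
    fix x assume "F x = {J x}"
    thus "startpoint d J F x \<and> endpoint d J F x"
      unfolding startpoint_def endpoint_def Haus_def dpt_set_def dset_pt_def by (simp add: qpm1[OF q])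
  qed
  have uniq: "\<And>x y. F x = {J x} \<Longrightarrow> F y = {J y} \<Longrightarrow> x = y"
  proof -
    fix x y assume hx: "F x = {J x}" and hy: "F y = {J y}"
    have 1: "d (J x) (J y) \<le> 0" using assms(9)[of x y] hx hy
      unfolding Haus_def dpt_set_def dset_pt_def by (simp add: qpm1[OF q])
    have 2: "d (J y) (J x) \<le> 0" using assms(9)[of y x] hx hy
      unfolding Haus_def dpt_set_def dset_pt_def by (simp add: qpm1[OF q])
    have "r * d x y \<le> 0" "r * d y x \<le> 0" using 1 2 assms(5)[of x y] assms(5)[of y x] by auto
    hence "d x y \<le> 0" "d y x \<le> 0" using assms(4) by (simp_all add: mult_le_0_iff)
    thus "x = y" using qpm0[OF q, of x y] qpm0[OF q, of y x] T0 by force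
  qed
  have bddS: "bdd_below (range S)" using Snn by (auto intro!: bdd_belowI2)
  have amp: "approx_mix_point_property d J F \<longleftrightarrow> (INF x. S x) = 0"
    unfolding approx_mix_point_property_def S_def by simp
  show ?thesis
  proof
    assume "\<exists>!x0. startpoint d J F x0 \<and> endpoint d J F x0"
    then obtain x0 where "F x0 = {J x0}" using key by blast
    hence "S x0 = 0" unfolding S_def by (simp add: dsym_def qpm1[OF q])
    hence "(INF x. S x) \<le> 0" using bddS by (metis cINF_lower UNIV_I)
    moreover have "0 \<le> (INF x. S x)" using Snn by (intro cINF_greatest) auto
    ultimately show "approx_mix_point_property d J F" using amp by simp
  next
    assume "approx_mix_point_property d J F"
    hence I0: "(INF x. S x) = 0" using amp by simp
    have "\<forall>n. \<exists>x. S x < inverse (real (Suc n))"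
    proof
      fix n
      have "(INF x. S x) < inverse (real (Suc n))" using I0 by simp
      thus "\<exists>x. S x < inverse (real (Suc n))" using cINF_less_iff[OF _ bddS] by auto
    qed
    then obtain xs where xs: "\<And>n. S (xs n) < inverse (real (Suc n))" by metis
    define s where "s n = S (xs n)" for n
    have JJ: "\<And>m n. d (J (xs m)) (J (xs n)) \<le> (1 + \<alpha>) * (s m + s n)"
    proof -
      fix m n
      have "d (J (xs m)) (J (xs n)) \<le> s m + s n + Haus d (F (xs m)) (F (xs n))"
      proof (rule lemA[OF q Fne Fne Fb Fb])
        fix a assume "a \<in> F (xs m)" thus "d (J (xs m)) a \<le> s m"
          unfolding s_def using Sup dsym_ge1 order_trans by metis
      next
        fix b assume "b \<in> F (xs n)" thus "d b (J (xs n)) \<le> s n"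
          unfolding s_def using Sup dsym_ge2 order_trans by metis
      qed
      also have "\<dots> \<le> s m + s n + \<alpha> * (s m + s n)"
        using assms(9)[of "xs m" "xs n"] Dle[of "xs m"] Dle[of "xs n"] assms(7) unfolding s_def
        by (smt (verit, ccfv_SIG) mult_left_mono)
      finally show "d (J (xs m)) (J (xs n)) \<le> (1 + \<alpha>) * (s m + s n)" by (simp add: algebra_simps)
    qed
    have xx: "\<And>m n. dsym d (xs m) (xs n) \<le> (1 + \<alpha>) * (s m + s n) / r"
    proof -
      fix m n
      have "r * d (xs m) (xs n) \<le> (1 + \<alpha>) * (s m + s n)" "r * d (xs n) (xs m) \<le> (1 + \<alpha>) * (s m + s n)"
        using JJ[of m n] JJ[of n m] assms(5) order_trans by (metis add.commute)+
      thus "dsym d (xs m) (xs n) \<le> (1 + \<alpha>) * (s m + s n) / r"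
        using assms(4) unfolding dsym_def by (simp add: pos_le_divide_eq mult.commute)
    qed
    have sle: "\<And>n N. N \<le> n \<Longrightarrow> s n < inverse (real (Suc N))"
    proof -
      fix n N :: nat assume "N \<le> n"
      hence "inverse (real (Suc n)) \<le> inverse (real (Suc N))" by (simp add: le_imp_inverse_le)
      thus "s n < inverse (real (Suc N))" using xs[of n] unfolding s_def by linarith
    qed
    have "ds_Cauchy d xs"
      unfolding ds_Cauchy_def
    proof (intro allI impI)
      fix e :: real assume e: "e > 0"
      have "e * r / 4 > 0" using e assms(4) by simp
      then obtain N where N: "inverse (real (Suc N)) < e * r / 4" using reals_Archimedean by blast
      show "\<exists>N. \<forall>m\<ge>N. \<forall>n\<ge>N. dsym d (xs m) (xs n) < e"
      proof (intro exI allI impI)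
        fix m n assume m: "N \<le> m" and n: "N \<le> n"
        have "s m + s n < e * r / 2" using sle[OF m] sle[OF n] N by linarith
        moreover have "0 \<le> s m + s n" using Snn unfolding s_def by (simp add: add_nonneg_nonneg)
        moreover have "\<alpha> * (s m + s n) \<le> 1 * (s m + s n)"
          using assms(8) \<open>0 \<le> s m + s n\<close> by (intro mult_right_mono) auto
        ultimately have "(1 + \<alpha>) * (s m + s n) < e * r"
          by (simp add: algebra_simps)
        hence "(1 + \<alpha>) * (s m + s n) / r < e" using assms(4) by (simp add: divide_less_eq)
        thus "dsym d (xs m) (xs n) < e" using xx[of m n] by linarith
      qed
    qed
    then obtain z where z: "(\<lambda>n. dsym d (xs n) z) \<longlonglongrightarrow> 0"
      using compl unfolding ds_converges_def by blast
    define t where "t n = dsym d (J (xs n)) (J z)" for n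
    have tlim: "t \<longlonglongrightarrow> 0"
      unfolding LIMSEQ_iff
    proof (intro allI impI)
      fix e :: real assume e: "e > 0"
      obtain \<delta> where \<delta>: "\<delta> > 0" "\<And>y. dsym d z y < \<delta> \<Longrightarrow> dsym d (J z) (J y) < e"
        using assms(3) e unfolding ds_continuous_def by blast
      obtain N where N: "\<And>n. n \<ge> N \<Longrightarrow> norm (dsym d (xs n) z - 0) < \<delta>"
        using z \<delta>(1) unfolding LIMSEQ_iff by blast
      show "\<exists>no. \<forall>n\<ge>no. norm (t n - 0) < e"
      proof (intro exI allI impI)
        fix n assume "N \<le> n"
        hence "dsym d z (xs n) < \<delta>" using N[of n] dsym_comm[of d z] by auto
        hence "dsym d (J z) (J (xs n)) < e" using \<delta> by blast
        thus "norm (t n - 0) < e" unfolding t_def using dsym_nn[OF q] dsym_comm[of d "J z"] by simp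
      qed
    qed
    have slim: "s \<longlonglongrightarrow> 0"
    proof (rule tendsto_sandwich[of "\<lambda>_. 0" s sequentially "\<lambda>n. inverse (real (Suc n))"])
      show "\<forall>\<^sub>F n in sequentially. 0 \<le> s n" using Snn unfolding s_def by simp
      show "\<forall>\<^sub>F n in sequentially. s n \<le> inverse (real (Suc n))" using xs unfolding s_def
        by (simp add: less_imp_le)
    qed (simp_all add: LIMSEQ_inverse_real_of_nat del: of_nat_Suc)
    have sd: "\<And>n a. a \<in> F (xs n) \<Longrightarrow> d (J (xs n)) a \<le> s n"
      unfolding s_def using Sup dsym_ge1 order_trans by metis
    have sd2: "\<And>n a. a \<in> F (xs n) \<Longrightarrow> d a (J (xs n)) \<le> s n"
      unfolding s_def using Sup dsym_ge2 order_trans by metis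
    have td: "\<And>n. d (J z) (J (xs n)) \<le> t n" unfolding t_def by (rule dsym_ge2)
    have td2: "\<And>n. d (J (xs n)) (J z) \<le> t n" unfolding t_def by (rule dsym_ge1)
    have H: "\<And>n. Haus d (F (xs n)) (F z) \<le> \<alpha> * (s n + dpt_set d (J z) (F z))"
      "\<And>n. Haus d (F z) (F (xs n)) \<le> \<alpha> * (s n + dpt_set d (J z) (F z))"
      using assms(9) Dle assms(7) unfolding s_def
      by (smt (verit, ccfv_SIG) mult_left_mono)+
    have left: "\<And>y. y \<in> F z \<Longrightarrow> d (J z) y \<le> 0"
    proof -
      fix y assume y: "y \<in> F z"
      have "\<And>n. (1 - \<alpha>) * d (J z) y \<le> t n + (1 + \<alpha>) * s n"
      proof -
        fix n
        have "d (J z) y \<le> (t n + s n) + Haus d (F (xs n)) (F z)"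
        proof (rule lemB[OF q Fne Fne Fb Fb _ y])
          fix a assume a: "a \<in> F (xs n)"
          have "d (J z) a \<le> d (J z) (J (xs n)) + d (J (xs n)) a" by (rule qpm2[OF q])
          thus "d (J z) a \<le> t n + s n" using td[of n] sd[OF a] by linarith
        qed
        moreover have "dpt_set d (J z) (F z) \<le> d (J z) y" by (rule dpt_lower[OF q y])
        ultimately have "d (J z) y \<le> t n + s n + \<alpha> * (s n + d (J z) y)"
          using H(1)[of n] assms(7) by (smt (verit, ccfv_SIG) mult_left_mono)
        thus "(1 - \<alpha>) * d (J z) y \<le> t n + (1 + \<alpha>) * s n" by (simp add: algebra_simps)
      qed
      moreover have "(\<lambda>n. t n + (1 + \<alpha>) * s n) \<longlonglongrightarrow> 0"
        using tendsto_add[OF tlim tendsto_mult_right_zero[OF slim]] by simp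
      ultimately have "(1 - \<alpha>) * d (J z) y \<le> 0" by (intro LIMSEQ_le_const) auto
      thus "d (J z) y \<le> 0" using assms(8) by (simp add: mult_le_0_iff)
    qed
    have Dz: "dpt_set d (J z) (F z) \<le> 0"
    proof -
      obtain y where y: "y \<in> F z" using Fne by blast
      show ?thesis using dpt_lower[OF q y, of "J z"] left[OF y] by linarith
    qed
    have right: "\<And>y. y \<in> F z \<Longrightarrow> d y (J z) \<le> 0"
    proof -
      fix y assume y: "y \<in> F z"
      have "\<And>n. d y (J z) \<le> t n + (1 + \<alpha>) * s n"
      proof -
        fix n
        have "d y (J z) \<le> (s n + t n) + Haus d (F z) (F (xs n))"
        proof (rule lemC[OF q Fne Fne Fb Fb _ y])
          fix b assume b: "b \<in> F (xs n)"
          have "d b (J z) \<le> d b (J (xs n)) + d (J (xs n)) (J z)" by (rule qpm2[OF q])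
          thus "d b (J z) \<le> s n + t n" using td2[of n] sd2[OF b] by linarith
        qed
        thus "d y (J z) \<le> t n + (1 + \<alpha>) * s n"
          using H(2)[of n] mult_nonneg_nonpos[OF less_imp_le[OF assms(7)] Dz]
          by (simp add: algebra_simps)
      qed
      moreover have "(\<lambda>n. t n + (1 + \<alpha>) * s n) \<longlonglongrightarrow> 0"
        using tendsto_add[OF tlim tendsto_mult_right_zero[OF slim]] by simp
      ultimately show "d y (J z) \<le> 0" by (intro LIMSEQ_le_const) auto
    qed
    have "F z = {J z}"
    proof -
      have "\<forall>y\<in>F z. y = J z"
        using left right qpm0[OF q] T0 by (metis order_antisym)
      thus ?thesis using Fne[of z] by auto
    qed
    thus "\<exists>!x0. startpoint d J F x0 \<and> endpoint d J F x0"
      using key uniq by blast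
  qed
qed

end
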